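(* Let $\widetilde{\mathbf{X}}\in\mathbb{R}^d$ be a random vector, and let $P_N$ be the empirical distribution of $N$ i.i.d. copies of $\widetilde{\mathbf{X}}$, with $P$ its distribution. Let $f_1,f_2,\dots$ be a sequence in $H$ with $f_N\in h(N)\mathcal{F}_N$, where $h(N)\in o(N^{1/4-\delta})$ for some $\delta>0$. Assume $\widehat R_N(\mathcal{F}_N)\in O(N^{-1/2})$. Then $$\big|(P_N-P)f_N^2\big|\xrightarrow{\ \mathbb{P}\ }0\qquad(N\to\infty).$$
   Context: $H=H_1\oplus\cdots\oplus H_d$ is the additive RKHS of Gaussian kernels $K_j(x,x')=\exp(-|x-x'|^2/(2\varsigma_j))$, with bounded kernel $K=\sum_jK_j$. $$\mathcal{F}_N=\Big\{f\in H: f=\frac1{\sqrt N}\sum_{\ell=1}^N\beta_\ell K(\cdot,\mathbf{x}_\ell),\ \|f\|_H=1,\ \beta\in\mathbb{R}^N,\ \mathbf{x}_1,\dots,\mathbf{x}_N\in\mathbb{R}^d\Big\},$$ and $h\mathcal{F}_N=\{hf:f\in\mathcal{F}_N\}$. Empirical Rademacher complexity: for observations $\mathbf{x}_1,\dots,\mathbf{x}_N$ and i.i.d. Rademacher signs $\sigma_\ell$ independent of the data, $$\widehat R_N(\mathcal{F})=\frac1N\mathbb{E}_\sigma\Big[\sup_{f\in\mathcal{F}}\Big|\sum_{\ell=1}^N\sigma_\ell f(\mathbf{x}_\ell)\Big|\Big].$$ $(P_N-P)g=\frac1N\sum_\ell g(\mathbf{x}_\ell)-\mathbb{E}[g(\widetilde{\mathbf{X}})]$.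 *)

theory Defs
  imports "HOL-Probability.Probability" "HOL-Library.Landau_Symbols"
begin

definition add_gauss_kernel :: "('d::finite \<Rightarrow> real) \<Rightarrow> real^'d \<Rightarrow> real^'d \<Rightarrow> real" where
  "add_gauss_kernel s x y = (\<Sum>j\<in>UNIV. exp (- ((x $ j - y $ j)^2) / (2 * s j)))"

text \<open>The class F_N: functions (1/sqrt N) sum_l beta_l K(., c_l) with RKHS norm 1;
  the squared RKHS norm of such a function is (1/N) sum_l sum_m beta_l beta_m K(c_l, c_m).\<close>
definition Fclass :: "('d::finite \<Rightarrow> real) \<Rightarrow> nat \<Rightarrow> (real^'d \<Rightarrow> real) set" where
  "Fclass s N = {f. \<exists>(\<beta>::nat \<Rightarrow> real) (c::nat \<Rightarrow> real^'d).
      f = (\<lambda>x. (1 / sqrt (real N)) * (\<Sum>l<N. \<beta> l * add_gauss_kernel s x (c l))) \<and>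
      (1 / real N) * (\<Sum>l<N. \<Sum>m<N. \<beta> l * \<beta> m * add_gauss_kernel s (c l) (c m)) = 1}"

definition emp_rademacher :: "('a \<Rightarrow> real) set \<Rightarrow> nat \<Rightarrow> (nat \<Rightarrow> 'a) \<Rightarrow> real" where
  "emp_rademacher F N x =
     (1 / real N) * ((\<Sum>\<sigma>\<in>PiE {..<N} (\<lambda>_. {-1, 1::real}).
         (SUP f\<in>F. \<bar>\<Sum>l<N. \<sigma> l * f (x l)\<bar>)) / 2 ^ N)"

end

theory Submission imports Defs "HOL-Real_Asymp.Real_Asymp" begin

lemma gauss1_psd:
  fixes I :: "'i set" and v a :: "'i \<Rightarrow> real" and s :: real
  assumes "finite I" "s > 0"
  shows "0 \<le> (\<Sum>i\<in>I. \<Sum>j\<in>I. v i * v j * exp (- ((a i - a j)^2) / (2 * s)))"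
proof -
  define u where "u i = v i * exp (- ((a i)^2) / (2 * s))" for i
  have eq: "v i * v j * exp (- ((a i - a j)^2) / (2 * s)) = u i * u j * exp (a i * a j / s)" for i j
  proof -
    have "- ((a i - a j)^2) / (2 * s) = - ((a i)^2) / (2 * s) + - ((a j)^2) / (2 * s) + a i * a j / s"
      using assms(2) by (simp add: field_simps power2_eq_square)
    then have "exp (- ((a i - a j)^2) / (2 * s)) = exp (- ((a i)^2) / (2 * s)) * exp (- ((a j)^2) / (2 * s)) * exp (a i * a j / s)"
      by (simp only: exp_add)
    then show ?thesis by (simp add: u_def mult_ac)
  qed
  have ser: "(\<lambda>k. u i * u j * ((a i * a j / s)^k / fact k)) sums (u i * u j * exp (a i * a j / s))" for i j
    using sums_mult[OF exp_converges[of "a i * a j / s"]] by (simp add: divide_inverse mult.commute)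
  have S: "(\<lambda>k. \<Sum>i\<in>I. \<Sum>j\<in>I. u i * u j * ((a i * a j / s)^k / fact k)) sums
        (\<Sum>i\<in>I. \<Sum>j\<in>I. u i * u j * exp (a i * a j / s))"
    by (intro sums_sum ser)
  have tm: "(\<Sum>i\<in>I. \<Sum>j\<in>I. u i * u j * ((a i * a j / s)^k / fact k)) =
      (\<Sum>i\<in>I. u i * a i ^ k)^2 / (s^k * fact k)" for k
    by (simp add: power2_eq_square sum_distrib_left sum_distrib_right sum_divide_distrib
        power_mult_distrib power_divide algebra_simps)
  have "0 \<le> (\<Sum>i\<in>I. \<Sum>j\<in>I. u i * u j * exp (a i * a j / s))"
    using sums_le[OF _ sums_zero S] tm assms(2) by simp
  then show ?thesis by (simp only: eq)
qed

lemma kernel_psd: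
  fixes I :: "'i set" and v :: "'i \<Rightarrow> real" and p :: "'i \<Rightarrow> real^'d::finite"
  assumes "finite I" "\<And>j. s j > 0"
  shows "0 \<le> (\<Sum>i\<in>I. \<Sum>k\<in>I. v i * v k * add_gauss_kernel s (p i) (p k))"
proof -
  have "(\<Sum>i\<in>I. \<Sum>k\<in>I. v i * v k * add_gauss_kernel s (p i) (p k)) =
     (\<Sum>j\<in>UNIV. \<Sum>i\<in>I. \<Sum>k\<in>I. v i * v k * exp (- ((p i $ j - p k $ j)^2) / (2 * s j)))"
    unfolding add_gauss_kernel_def by (simp add: sum_distrib_left sum.swap[of _ UNIV])
  also have "\<dots> \<ge> 0"
    by (intro sum_nonneg gauss1_psd assms)
  finally show ?thesis .
qed

lemma kernel_sym: "add_gauss_kernel s x y = add_gauss_kernel s y x"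
  unfolding add_gauss_kernel_def by (simp add: power2_commute)

lemma kernel_diag: "add_gauss_kernel s x x = real CARD('d)" for x :: "real^'d::finite"
  unfolding add_gauss_kernel_def by simp

lemma Fclass_bound:
  fixes g :: "real^'d::finite \<Rightarrow> real"
  assumes g: "g \<in> Fclass s N" and N: "N \<ge> 1" and spos: "\<And>j. s j > 0"
  shows "(g x)^2 \<le> real CARD('d)"
proof -
  define K where "K = add_gauss_kernel s"
  obtain \<beta> c where gdef: "g = (\<lambda>x. (1 / sqrt (real N)) * (\<Sum>l<N. \<beta> l * K x (c l)))"
    and nrm: "(1 / real N) * (\<Sum>l<N. \<Sum>m<N. \<beta> l * \<beta> m * K (c l) (c m)) = 1"
    using g unfolding Fclass_def K_def by blast
  define A where "A = (\<Sum>l<N. \<Sum>m<N. \<beta> l * \<beta> m * K (c l) (c m))"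
  define B where "B = (\<Sum>l<N. \<beta> l * K (c l) x)"
  define C where "C = real CARD('d)"
  have Cpos: "C > 0" by (simp add: C_def)
  have A: "A = real N" using nrm N by (simp add: A_def field_simps)
  have Q: "0 \<le> A + 2 * t * B + t^2 * C" for t
  proof -
    define v where "v = \<beta>(N := t)"
    define p where "p = c(N := x)"
    have "0 \<le> (\<Sum>i<Suc N. \<Sum>k<Suc N. v i * v k * K (p i) (p k))"
      unfolding K_def by (intro kernel_psd spos) auto
    also have "(\<Sum>i<Suc N. \<Sum>k<Suc N. v i * v k * K (p i) (p k)) =
       (\<Sum>i<N. \<Sum>k<N. v i * v k * K (p i) (p k)) + (\<Sum>i<N. v i * v N * K (p i) (p N))
        + (\<Sum>k<N. v N * v k * K (p N) (p k)) + v N * v N * K (p N) (p N)"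
      by (simp add: sum.distrib)
    also have "(\<Sum>i<N. \<Sum>k<N. v i * v k * K (p i) (p k)) = A"
      unfolding A_def v_def p_def by (intro sum.cong refl) auto
    also have "(\<Sum>i<N. v i * v N * K (p i) (p N)) = t * B"
      unfolding B_def v_def p_def by (auto simp: sum_distrib_left mult_ac intro!: sum.cong)
    also have "(\<Sum>k<N. v N * v k * K (p N) (p k)) = t * B"
      unfolding B_def v_def p_def by (auto simp: sum_distrib_left mult_ac kernel_sym[of s x] K_def intro!: sum.cong)
    also have "v N * v N * K (p N) (p N) = t^2 * C"
      unfolding v_def p_def C_def K_def by (simp add: kernel_diag power2_eq_square)
    finally show ?thesis by (simp add: algebra_simps)
  qed
  have "B^2 \<le> A * C"
  proof -
    have "0 \<le> A + 2 * (- B / C) * B + (- B / C)^2 * C" by (rule Q)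
    then have "0 \<le> (A * C - B^2) / C" using Cpos by (simp add: field_simps power2_eq_square)
    then show ?thesis using Cpos by (simp add: divide_nonneg_pos zero_le_divide_iff)
  qed
  moreover have "g x = B / sqrt (real N)"
    unfolding gdef B_def K_def by (simp add: kernel_sym[of s x])
  then have "B^2 = (g x)^2 * real N"
    using N by (simp add: power_divide)
  ultimately have "(g x)^2 * real N \<le> C * real N" using A by (simp add: mult.commute)
  then show ?thesis using N unfolding C_def by simp
qed

lemma Fclass_meas:
  fixes g :: "real^'d::finite \<Rightarrow> real"
  assumes g: "g \<in> Fclass s N"
  shows "g \<in> borel_measurable borel"
proof -
  obtain \<beta> c where gdef: "g = (\<lambda>x. (1 / sqrt (real N)) * (\<Sum>l<N. \<beta> l * add_gauss_kernel s x (c l)))"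
    using g unfolding Fclass_def by blast
  have "continuous_on UNIV g"
    unfolding gdef add_gauss_kernel_def divide_inverse by (intro continuous_intros)
  then show ?thesis by (rule borel_measurable_continuous_onI)
qed

lemma asym:
  fixes h :: "nat \<Rightarrow> real"
  assumes h: "h \<in> o(\<lambda>N. real N powr (1/4 - \<delta>))" and d: "\<delta> > 0" and C: "C \<ge> 0" and e: "e > 0"
  shows "(\<lambda>N. (C * (h N)^2 + 1)^2 / (real N * e^2)) \<longlonglongrightarrow> 0"
proof -
  have "(\<lambda>N. real N powr (1/4 - \<delta>)) \<in> O(\<lambda>N. real N powr (1/4))"
  proof (rule bigoI[where c=1])
    show "\<forall>\<^sub>F N in sequentially. norm (real N powr (1/4 - \<delta>)) \<le> 1 * norm (real N powr (1/4))"
      using eventually_ge_at_top[of "1::nat"]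
    proof eventually_elim
      case (elim N)
      then show ?case using d by (auto intro!: powr_mono)
    qed
  qed
  with h have "h \<in> o(\<lambda>N. real N powr (1/4))" by (rule landau_o.small_big_trans)
  then have q: "(\<lambda>N. h N / real N powr (1/4)) \<longlonglongrightarrow> 0" by (rule smalloD_tendsto)
  have r: "(\<lambda>N. 1 / sqrt (real N)) \<longlonglongrightarrow> 0" by real_asymp
  have lim: "(\<lambda>N. (C * (h N / real N powr (1/4))^2 + 1 / sqrt (real N))^2 / e^2) \<longlonglongrightarrow> (C * 0^2 + 0)^2 / e^2"
    by (intro tendsto_intros q r) (use e in auto)
  have ev: "\<forall>\<^sub>F N in sequentially. (C * (h N / real N powr (1/4))^2 + 1 / sqrt (real N))^2 / e^2
      = (C * (h N)^2 + 1)^2 / (real N * e^2)"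
    using eventually_ge_at_top[of "1::nat"]
  proof eventually_elim
    case (elim N)
    have Np: "real N > 0" using elim by simp
    have r2: "(real N powr (1/4))^2 = sqrt (real N)"
      using Np by (simp add: powr_realpow[symmetric] powr_powr powr_half_sqrt)
    have "C * (h N / real N powr (1/4))^2 + 1 / sqrt (real N) = (C * (h N)^2 + 1) / sqrt (real N)"
      using Np by (simp add: power_divide r2 field_simps)
    then show ?case using Np by (simp add: power_divide)
  qed
  show ?thesis using tendsto_cong[OF ev] lim by simp
qed

theorem corollary2:
  fixes M :: "'w measure" and X :: "nat \<Rightarrow> 'w \<Rightarrow> real^'d::finite"
    and P :: "(real^'d) measure" and s :: "'d \<Rightarrow> real"
    and f :: "nat \<Rightarrow> real^'d \<Rightarrow> real" and h :: "nat \<Rightarrow> real" and \<delta> :: real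
  assumes "prob_space M"
    and "\<And>i. X i \<in> borel_measurable M"
    and "prob_space.indep_vars M (\<lambda>_. borel) X UNIV"
    and "\<And>i. distr M borel (X i) = P"
    and "\<And>j. s j > 0"
    and "\<delta> > 0"
    and "h \<in> o(\<lambda>N. real N powr (1/4 - \<delta>))"
    and "\<And>N. N \<ge> 1 \<Longrightarrow> \<exists>g\<in>Fclass s N. f N = (\<lambda>x. h N * g x)"
    and "AE \<omega> in M. (\<lambda>N. emp_rademacher (Fclass s N) N (\<lambda>l. X l \<omega>))
                       \<in> O(\<lambda>N. real N powr (-1/2))"
  shows "\<forall>\<epsilon>>0. (\<lambda>N. measure M {\<omega> \<in> space M.
            \<bar>(1 / real N) * (\<Sum>l<N. (f N (X l \<omega>))^2) - (\<integral>x. (f N x)^2 \<partial>P)\<bar> > \<epsilon>})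
          \<longlonglongrightarrow> 0"
proof (intro allI impI)
  fix \<epsilon> :: real assume e: "\<epsilon> > 0"
  interpret M: prob_space M by (rule assms(1))
  define B where "B N = real CARD('d) * (h N)^2 + 1" for N
  have bound: "measure M {\<omega> \<in> space M.
            \<bar>(1 / real N) * (\<Sum>l<N. (f N (X l \<omega>))^2) - (\<integral>x. (f N x)^2 \<partial>P)\<bar> > \<epsilon>}
        \<le> (B N)^2 / (real N * \<epsilon>^2)" if N: "N \<ge> 1" for N
  proof -
    obtain g where g: "g \<in> Fclass s N" and fN: "f N = (\<lambda>x. h N * g x)"
      using assms(8)[OF N] by blast
    define F where "F x = (f N x)^2" for x
    have gm: "g \<in> borel_measurable borel" by (rule Fclass_meas[OF g])
    have Fm: "F \<in> borel_measurable borel" unfolding F_def fN using gm by measurable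
    have Fb: "F x \<in> {0..B N}" for x
    proof -
      have "(g x)^2 \<le> real CARD('d)" by (rule Fclass_bound[OF g N assms(5)])
      then have "(h N)^2 * (g x)^2 \<le> (h N)^2 * real CARD('d)" by (intro mult_left_mono) auto
      then show ?thesis unfolding F_def fN B_def by (simp add: power_mult_distrib mult.commute)
    qed
    have Bpos: "B N > 0" unfolding B_def by (simp add: add_nonneg_pos)
    have Xm: "\<And>i. X i \<in> measurable M borel" using assms(2) by simp
    have ind: "M.indep_vars (\<lambda>_. borel) (\<lambda>l \<omega>. F (X l \<omega>)) {..<N}"
      by (rule M.indep_vars_compose2[OF M.indep_vars_subset[OF assms(3)]]) (use Fm in auto)
    have dist: "distr M borel (\<lambda>\<omega>. F (X l \<omega>)) = distr M borel (\<lambda>\<omega>. F (X 0 \<omega>))" for l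
    proof -
      have "distr M borel (\<lambda>\<omega>. F (X l \<omega>)) = distr (distr M borel (X l)) borel F"
        by (subst distr_distr) (use Fm Xm in \<open>auto simp: comp_def\<close>)
      also have "\<dots> = distr (distr M borel (X 0)) borel F" by (simp add: assms(4))
      also have "\<dots> = distr M borel (\<lambda>\<omega>. F (X 0 \<omega>))"
        by (subst distr_distr) (use Fm Xm in \<open>auto simp: comp_def\<close>)
      finally show ?thesis .
    qed
    interpret H: Hoeffding_ineq_iid M "{..<N}" "\<lambda>l \<omega>. F (X l \<omega>)" "\<lambda>\<omega>. F (X 0 \<omega>)" 0 "B N"
       "M.expectation (\<lambda>\<omega>. F (X 0 \<omega>))"
    proof unfold_locales
      show "finite {..<N}" by simp
      show "M.indep_vars (\<lambda>_. borel) (\<lambda>l \<omega>. F (X l \<omega>)) {..<N}" by (rule ind)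
      show "\<And>i. i \<in> {..<N} \<Longrightarrow> distr M borel (\<lambda>\<omega>. F (X i \<omega>)) = distr M borel (\<lambda>\<omega>. F (X 0 \<omega>))"
        by (rule dist)
      show "M.random_variable borel (\<lambda>\<omega>. F (X 0 \<omega>))" using measurable_compose[OF Xm[of 0] Fm] by simp
      show "AE x in M. F (X 0 x) \<in> {0..B N}" using Fb by simp
    qed simp
    have mu: "M.expectation (\<lambda>\<omega>. F (X 0 \<omega>)) = (\<integral>x. F x \<partial>P)"
      using integral_distr[OF Xm Fm, of 0] assms(4)[of 0] by simp
    have hoe: "M.prob {x\<in>space M. \<bar>(\<Sum>i\<in>{..<N}. F (X i x)) / real (card {..<N}) - M.expectation (\<lambda>\<omega>. F (X 0 \<omega>))\<bar> \<ge> \<epsilon>}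
        \<le> 2 * exp (-2 * real (card {..<N}) * \<epsilon>\<^sup>2 / (B N - 0)\<^sup>2)"
      by (rule H.Hoeffding_ineq_abs_ge') (use e Bpos N in \<open>auto simp: lessThan_empty_iff\<close>)
    have sub: "{\<omega> \<in> space M.
            \<bar>(1 / real N) * (\<Sum>l<N. (f N (X l \<omega>))^2) - (\<integral>x. (f N x)^2 \<partial>P)\<bar> > \<epsilon>}
         \<subseteq> {x\<in>space M. \<bar>(\<Sum>i\<in>{..<N}. F (X i x)) / real (card {..<N}) - M.expectation (\<lambda>\<omega>. F (X 0 \<omega>))\<bar> \<ge> \<epsilon>}"
      unfolding mu unfolding F_def[abs_def] by auto
    have meas2: "{x\<in>space M. \<bar>(\<Sum>i\<in>{..<N}. F (X i x)) / real (card {..<N}) - M.expectation (\<lambda>\<omega>. F (X 0 \<omega>))\<bar> \<ge> \<epsilon>} \<in> sets M"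
      using Fm Xm by measurable
    define y where "y = 2 * real N * \<epsilon>^2 / (B N)^2"
    have ypos: "y > 0" unfolding y_def using N e Bpos by simp
    have "exp (-y) \<le> 1 / y"
    proof -
      have "y \<le> exp y" using exp_ge_add_one_self[of y] by linarith
      then show ?thesis using ypos by (simp add: exp_minus field_simps)
    qed
    have "measure M {\<omega> \<in> space M.
            \<bar>(1 / real N) * (\<Sum>l<N. (f N (X l \<omega>))^2) - (\<integral>x. (f N x)^2 \<partial>P)\<bar> > \<epsilon>}
        \<le> 2 * exp (-y)"
      using M.finite_measure_mono[OF sub meas2] hoe unfolding y_def by simp
    also have "\<dots> \<le> 2 * (1 / y)" using \<open>exp (-y) \<le> 1 / y\<close> by simp
    also have "\<dots> = (B N)^2 / (real N * \<epsilon>^2)" unfolding y_def using N e Bpos by (simp add: field_simps)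
    finally show ?thesis .
  qed
  have lim: "(\<lambda>N. (B N)^2 / (real N * \<epsilon>^2)) \<longlonglongrightarrow> 0"
    unfolding B_def by (rule asym[OF assms(7) assms(6) _ e]) simp
  show "(\<lambda>N. measure M {\<omega> \<in> space M.
            \<bar>(1 / real N) * (\<Sum>l<N. (f N (X l \<omega>))^2) - (\<integral>x. (f N x)^2 \<partial>P)\<bar> > \<epsilon>}) \<longlonglongrightarrow> 0"
  proof (rule tendsto_sandwich[OF _ _ tendsto_const lim])
    show "\<forall>\<^sub>F N in sequentially. 0 \<le> measure M {\<omega> \<in> space M.
            \<bar>(1 / real N) * (\<Sum>l<N. (f N (X l \<omega>))^2) - (\<integral>x. (f N x)^2 \<partial>P)\<bar> > \<epsilon>}"
      by simp
    show "\<forall>\<^sub>F N in sequentially. measure M {\<omega> \<in> space M.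
            \<bar>(1 / real N) * (\<Sum>l<N. (f N (X l \<omega>))^2) - (\<integral>x. (f N x)^2 \<partial>P)\<bar> > \<epsilon>} \<le> (B N)^2 / (real N * \<epsilon>^2)"
      using eventually_ge_at_top[of "1::nat"] by eventually_elim (rule bound)
  qed
qed

end
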